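(* Let $\alpha_1,\nu_1,\alpha_2,\nu_2,\omega_1,\omega_2,\xi_1,\xi_2$ be positive real numbers. Define, for $h\ge 0$, $$\widetilde{\varphi}_{\mathcal{CM}}(h)=\omega_1\,\frac{\gamma\big(\nu_1/2,(h^2+\alpha_1)\xi_1\big)}{\Gamma(\nu_1/2)}\,\varphi_{\mathcal{C}}(h;\alpha_1,\nu_1)+\omega_2\left[\varphi_{\mathcal{M}}(h;\alpha_2,\nu_2)-\frac{1}{\Gamma(\nu_2)}\,\Gamma\!\left(\nu_2;\frac{1}{4\xi_2\alpha_2^2};\frac{h^2}{4\alpha_2^2}\right)\right].$$ Then $\widetilde{\varphi}_{\mathcal{CM}}$ is positive definite in $\mathbb{R}^d$ for every $d\in\mathbb{N}$, i.e. for every $d,k\in\mathbb{N}$, all $a_1,\dots,a_k\in\mathbb{R}$ and all $\mathbf{s}_1,\dots,\mathbf{s}_k\in\mathbb{R}^d$, $\sum_{i,j=1}^k a_ia_j\,\widetilde{\varphi}_{\mathcal{CM}}(\|\mathbf{s}_i-\mathbf{s}_j\|)\ge 0$.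
   Context: $\Gamma$ denotes the gamma function. The lower incomplete gamma function is $\gamma(a,x)=\int_0^x t^{a-1}e^{-t}\,dt$ for $a>0,x\ge0$. The generalized incomplete gamma function is $\Gamma(a;b;c)=\int_b^\infty t^{a-1}\exp(-t-c\,t^{-1})\,dt$ for $a>0$, $b>0$, $c\ge 0$. The Matérn function is $\varphi_{\mathcal{M}}(h;\alpha,\nu)=\frac{2^{1-\nu}}{\Gamma(\nu)}(h/\alpha)^\nu K_\nu(h/\alpha)$ for $h>0$, with $\varphi_{\mathcal{M}}(0;\alpha,\nu)=1$ (continuous extension), where $K_\nu$ is the modified Bessel function of the second kind and $\alpha,\nu>0$. The Cauchy function is $\varphi_{\mathcal{C}}(h;\alpha,\nu)=(1+h^2/\alpha)^{-\nu/2}$, $h\ge0$, $\alpha,\nu>0$. *)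

theory Defs
  imports "HOL-Analysis.Analysis"
begin

definition lower_inc_gamma :: "real \<Rightarrow> real \<Rightarrow> real" where
  "lower_inc_gamma a x = integral {0..x} (\<lambda>t. t powr (a - 1) * exp (- t))"

definition gen_inc_gamma :: "real \<Rightarrow> real \<Rightarrow> real \<Rightarrow> real" where
  "gen_inc_gamma a b c = integral {b..} (\<lambda>t. t powr (a - 1) * exp (- t - c / t))"

definition besselK :: "real \<Rightarrow> real \<Rightarrow> real" where
  "besselK \<nu> x = integral {0..} (\<lambda>t. exp (- x * cosh t) * cosh (\<nu> * t))"

text \<open>Matern function, with continuous extension 1 at h = 0.\<close>
definition matern :: "real \<Rightarrow> real \<Rightarrow> real \<Rightarrow> real" where
  "matern h \<alpha> \<nu> = (if h = 0 then 1 else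
     2 powr (1 - \<nu>) / Gamma \<nu> * (h / \<alpha>) powr \<nu> * besselK \<nu> (h / \<alpha>))"

definition cauchy :: "real \<Rightarrow> real \<Rightarrow> real \<Rightarrow> real" where
  "cauchy h \<alpha> \<nu> = (1 + h\<^sup>2 / \<alpha>) powr (- \<nu> / 2)"

definition phiCM :: "real \<Rightarrow> real \<Rightarrow> real \<Rightarrow> real \<Rightarrow> real \<Rightarrow> real \<Rightarrow> real \<Rightarrow> real \<Rightarrow> real \<Rightarrow> real" where
  "phiCM \<alpha>1 \<nu>1 \<alpha>2 \<nu>2 \<omega>1 \<omega>2 \<xi>1 \<xi>2 h =
     \<omega>1 * (lower_inc_gamma (\<nu>1 / 2) ((h\<^sup>2 + \<alpha>1) * \<xi>1) / Gamma (\<nu>1 / 2)) * cauchy h \<alpha>1 \<nu>1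
   + \<omega>2 * (matern h \<alpha>2 \<nu>2
       - 1 / Gamma \<nu>2 * gen_inc_gamma \<nu>2 (1 / (4 * \<xi>2 * \<alpha>2\<^sup>2)) (h\<^sup>2 / (4 * \<alpha>2\<^sup>2)))"

end

theory Submission
  imports Defs
begin


lemma dot_pow_psd:
  fixes x :: "nat \<Rightarrow> real ^ 'd"
  shows "(\<Sum>i<k. \<Sum>j<k. c i * c j * (x i \<bullet> x j) ^ n) \<ge> 0"
proof (induction n arbitrary: c)
  case 0
  have "(\<Sum>i<k. \<Sum>j<k. c i * c j * (x i \<bullet> x j) ^ 0) = (\<Sum>i<k. c i)^2"
    by (simp add: power2_eq_square sum_product)
  then show ?case by simp
next
  case (Suc n)
  have "(\<Sum>i<k. \<Sum>j<k. c i * c j * (x i \<bullet> x j) ^ Suc n)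
     = (\<Sum>i<k. \<Sum>j<k. \<Sum>l\<in>UNIV. (c i * x i $ l) * (c j * x j $ l) * (x i \<bullet> x j) ^ n)"
    by (simp add: inner_vec_def sum_distrib_left sum_distrib_right mult_ac)
  also have "\<dots> = (\<Sum>l\<in>UNIV. \<Sum>i<k. \<Sum>j<k. (c i * x i $ l) * (c j * x j $ l) * (x i \<bullet> x j) ^ n)"
    by (simp add: sum.swap[of _ UNIV] )
  also have "\<dots> \<ge> 0"
    by (rule sum_nonneg) (rule Suc.IH)
  finally show ?case .
qed

lemma exp_dot_psd:
  fixes x :: "nat \<Rightarrow> real ^ 'd"
  shows "(\<Sum>i<k. \<Sum>j<k. c i * c j * exp (x i \<bullet> x j)) \<ge> 0"
proof -
  have "(\<lambda>n. \<Sum>i<k. \<Sum>j<k. c i * c j * ((x i \<bullet> x j) ^ n /\<^sub>R fact n))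
        sums (\<Sum>i<k. \<Sum>j<k. c i * c j * exp (x i \<bullet> x j))"
    by (intro sums_sum sums_mult exp_converges)
  moreover have "(\<lambda>n. \<Sum>i<k. \<Sum>j<k. c i * c j * ((x i \<bullet> x j) ^ n /\<^sub>R fact n))
     = (\<lambda>n. (\<Sum>i<k. \<Sum>j<k. c i * c j * (x i \<bullet> x j) ^ n) / fact n)"
    by (simp add: sum_divide_distrib divide_inverse mult_ac sum_distrib_left)
  ultimately have s: "(\<lambda>n. (\<Sum>i<k. \<Sum>j<k. c i * c j * (x i \<bullet> x j) ^ n) / fact n)
        sums (\<Sum>i<k. \<Sum>j<k. c i * c j * exp (x i \<bullet> x j))" by simp
  show ?thesis
    by (rule sums_le[OF _ sums_zero s]) (simp add: dot_pow_psd)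
qed

lemma gauss_psd:
  fixes s :: "nat \<Rightarrow> real ^ 'd" and u :: real
  assumes "u \<ge> 0"
  shows "(\<Sum>i<k. \<Sum>j<k. a i * a j * exp (- u * (norm (s i - s j))\<^sup>2)) \<ge> 0"
proof -
  define c where "c i = a i * exp (- u * (norm (s i))\<^sup>2)" for i
  define y where "y i = sqrt (2*u) *\<^sub>R s i" for i
  have "a i * a j * exp (- u * (norm (s i - s j))\<^sup>2) = c i * c j * exp (y i \<bullet> y j)" for i j
  proof -
    have e: "(norm (s i - s j))\<^sup>2 = (norm (s i))\<^sup>2 + (norm (s j))\<^sup>2 - 2 * (s i \<bullet> s j)"
      by (simp add: power2_norm_eq_inner inner_diff_left inner_diff_right inner_commute)
    moreover have "y i \<bullet> y j = 2 * u * (s i \<bullet> s j)"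
      using assms by (simp add: y_def)
    ultimately have "- u * (norm (s i - s j))\<^sup>2 = (- u * (norm (s i))\<^sup>2) + (- u * (norm (s j))\<^sup>2) + y i \<bullet> y j"
      unfolding e by (simp add: algebra_simps)
    then have "exp (- u * (norm (s i - s j))\<^sup>2) = exp (- u * (norm (s i))\<^sup>2) * exp (- u * (norm (s j))\<^sup>2) * exp (y i \<bullet> y j)"
      by (simp only: exp_add)
    then show ?thesis
      by (simp add: c_def mult_ac)
  qed
  then show ?thesis using exp_dot_psd[where k=k and c=c and x=y] by simp
qed



lemma mix_psd:
  fixes s :: "nat \<Rightarrow> real ^ 'd" and S :: "real set"
  assumes int: "\<And>h. h \<ge> 0 \<Longrightarrow> (\<lambda>v. w v * exp (- (g v * h\<^sup>2))) integrable_on S"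
    and eq: "\<And>h. h \<ge> 0 \<Longrightarrow> \<phi> h = integral S (\<lambda>v. w v * exp (- (g v * h\<^sup>2)))"
    and w: "\<And>v. v \<in> S \<Longrightarrow> w v \<ge> 0" and g: "\<And>v. v \<in> S \<Longrightarrow> g v \<ge> 0"
  shows "(\<Sum>i<k. \<Sum>j<k. a i * a j * \<phi> (norm (s i - s j))) \<ge> 0"
proof -
  have "(\<Sum>i<k. \<Sum>j<k. a i * a j * \<phi> (norm (s i - s j)))
      = (\<Sum>i<k. \<Sum>j<k. integral S (\<lambda>v. a i * a j * (w v * exp (- (g v * (norm (s i - s j))\<^sup>2)))))"
    by (simp add: eq)
  also have "\<dots> = (\<Sum>i<k. integral S (\<lambda>v. \<Sum>j<k. a i * a j * (w v * exp (- (g v * (norm (s i - s j))\<^sup>2)))))"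
    by (intro sum.cong refl integral_sum[symmetric]) (auto intro!: integrable_on_mult_right int)
  also have "\<dots> = integral S (\<lambda>v. \<Sum>i<k. \<Sum>j<k. a i * a j * (w v * exp (- (g v * (norm (s i - s j))\<^sup>2))))"
    by (intro integral_sum[symmetric]) (auto intro!: integrable_sum integrable_on_mult_right int)
  also have "\<dots> \<ge> 0"
  proof (rule integral_nonneg)
    show "(\<lambda>v. \<Sum>i<k. \<Sum>j<k. a i * a j * (w v * exp (- (g v * (norm (s i - s j))\<^sup>2)))) integrable_on S"
      by (auto intro!: integrable_sum integrable_on_mult_right int)
    fix v assume v: "v \<in> S"
    have "(\<Sum>i<k. \<Sum>j<k. a i * a j * (w v * exp (- (g v * (norm (s i - s j))\<^sup>2))))
        = w v * (\<Sum>i<k. \<Sum>j<k. a i * a j * exp (- (g v * (norm (s i - s j))\<^sup>2)))"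
      by (simp add: sum_distrib_left mult_ac)
    also have "\<dots> \<ge> 0" using w[OF v] gauss_psd[OF g[OF v], where a=a and s=s and k=k] by (simp add: mult_nonneg_nonneg)
    finally show "0 \<le> (\<Sum>i<k. \<Sum>j<k. a i * a j * (w v * exp (- (g v * (norm (s i - s j))\<^sup>2))))" .
  qed
  finally show ?thesis .
qed



lemma abs_int_subset:
  assumes "f absolutely_integrable_on A" "B \<in> sets lebesgue" "B \<subseteq> A"
  shows "f absolutely_integrable_on B"
  using assms unfolding absolutely_integrable_on_def by (rule set_integrable_subset)

lemma gamma_abs_int:
  fixes a :: real
  assumes "a > 0"
  shows "(\<lambda>t. t powr (a - 1) * exp (- t)) absolutely_integrable_on {0..}"
proof -
  have "((\<lambda>t. t powr (a - 1) / exp t) has_integral Gamma a) {0..}"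
    using Gamma_integral_real[OF assms] .
  then have "(\<lambda>t. t powr (a - 1) * exp (- t)) integrable_on {0..}"
    by (simp add: exp_minus divide_inverse has_integral_integrable)
  then show ?thesis
    by (rule nonnegative_absolutely_integrable_1) simp
qed

lemma aux_alg: "(P::real) > 0 \<Longrightarrow> G > 0 \<Longrightarrow> A / (G * P) * (P * U) * (E1 * E2) = A / G * (U * E1) * E2"
  by (simp add: field_simps)

lemma cauchy_mix:
  assumes \<alpha>: "\<alpha> > 0" and \<nu>: "\<nu> > 0" and \<xi>: "\<xi> > 0" and h: "h \<ge> 0"
  shows "((\<lambda>u. (\<alpha> powr (\<nu>/2) / Gamma (\<nu>/2) * (u powr (\<nu>/2 - 1) * exp (- (\<alpha> * u)))) * exp (- (u * h\<^sup>2)))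
          has_integral (lower_inc_gamma (\<nu>/2) ((h\<^sup>2 + \<alpha>) * \<xi>) / Gamma (\<nu>/2) * cauchy h \<alpha> \<nu>)) {0..\<xi>}"
proof -
  define a where "a = \<nu>/2"
  define L where "L = h\<^sup>2 + \<alpha>"
  have a: "a > 0" using \<nu> by (simp add: a_def)
  have L: "L > 0" using \<alpha> by (simp add: L_def add_nonneg_pos)
  define G where "G = (\<lambda>t::real. t powr (a - 1) * exp (- t))"
  have Gi: "G absolutely_integrable_on {0..L*\<xi>}"
    using abs_int_subset[OF gamma_abs_int[OF a]] unfolding G_def by auto
  have img: "(\<lambda>u. L * u) ` {0..\<xi>} = {0..L*\<xi>}"
    using L by (auto simp: image_iff intro!: bexI[where x="_ / L"])
  have inj: "inj_on (\<lambda>u. L * u) {0..\<xi>}" using L by (auto simp: inj_on_def)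
  have cv: "(\<lambda>u. \<bar>L\<bar> * G (L * u)) absolutely_integrable_on {0..\<xi>} \<and>
           integral {0..\<xi>} (\<lambda>u. \<bar>L\<bar> * G (L * u)) = integral {0..L*\<xi>} G"
    using has_absolute_integral_change_of_variables_1'[of "{0..\<xi>}" "\<lambda>u. L * u" "\<lambda>_. L" G "integral {0..L*\<xi>} G"]
      Gi img inj by (auto intro!: derivative_eq_intros)
  then have hi: "((\<lambda>u. \<bar>L\<bar> * G (L * u)) has_integral lower_inc_gamma a (L * \<xi>)) {0..\<xi>}"
    by (auto simp: lower_inc_gamma_def G_def has_integral_integral absolutely_integrable_on_def
        dest!: set_lebesgue_integral_eq_integral(1))
  define C where "C = \<alpha> powr a / (Gamma a * L powr a)"
  have hi2: "((\<lambda>u. C * (\<bar>L\<bar> * G (L * u))) has_integral C * lower_inc_gamma a (L * \<xi>)) {0..\<xi>}"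
    by (rule has_integral_mult_right[OF hi])
  have pt: "C * (\<bar>L\<bar> * G (L * u)) = (\<alpha> powr a / Gamma a * (u powr (a - 1) * exp (- (\<alpha> * u)))) * exp (- (u * h\<^sup>2))"
    if "u \<in> {0..\<xi>}" for u
  proof -
    have u: "u \<ge> 0" using that by simp
    have e1: "\<bar>L\<bar> * (L * u) powr (a - 1) = L powr a * u powr (a - 1)"
      using L u by (simp add: powr_mult powr_diff)
    have e2: "exp (- (L * u)) = exp (- (\<alpha> * u)) * exp (- (u * h\<^sup>2))"
      by (simp add: L_def algebra_simps flip: exp_add)
    have "C * (\<bar>L\<bar> * G (L * u)) = C * (\<bar>L\<bar> * (L * u) powr (a - 1)) * exp (- (L * u))"
      unfolding G_def by (simp only: mult.assoc)
    also have "\<dots> = C * (L powr a * u powr (a - 1)) * (exp (- (\<alpha> * u)) * exp (- (u * h\<^sup>2)))"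
      unfolding e1 e2 ..
    also have "\<dots> = (\<alpha> powr a / Gamma a * (u powr (a - 1) * exp (- (\<alpha> * u)))) * exp (- (u * h\<^sup>2))"
      using L unfolding C_def by (intro aux_alg) (auto intro: Gamma_real_pos a)
    finally show ?thesis .
  qed
  have cau: "cauchy h \<alpha> \<nu> = \<alpha> powr a / L powr a"
  proof -
    have e: "1 + h\<^sup>2 / \<alpha> = L / \<alpha>" using \<alpha> by (simp add: L_def field_simps)
    have "cauchy h \<alpha> \<nu> = (L / \<alpha>) powr (- a)"
      unfolding cauchy_def e a_def by simp
    also have "\<dots> = \<alpha> powr a / L powr a"
      using L \<alpha> by (simp add: powr_minus powr_divide)
    finally show ?thesis .
  qed
  have "C * lower_inc_gamma a (L * \<xi>) = lower_inc_gamma a (L * \<xi>) / Gamma a * cauchy h \<alpha> \<nu>"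
    by (simp add: C_def cau)
  then show ?thesis
    using has_integral_eq[OF pt hi2] by (simp add: a_def L_def)
qed



lemma abs_int_imp_int: "f absolutely_integrable_on S \<Longrightarrow> f integrable_on S"
  for f :: "real \<Rightarrow> real"
  by (rule set_lebesgue_integral_eq_integral(1))

lemma F_abs_int:
  fixes \<nu> c :: real
  assumes \<nu>: "\<nu> > 0" and c: "c \<ge> 0"
  shows "(\<lambda>t. t powr (\<nu> - 1) * exp (- t - c / t)) absolutely_integrable_on {0<..}"
proof (rule measurable_bounded_by_integrable_imp_absolutely_integrable)
  show "(\<lambda>t. t powr (\<nu> - 1) * exp (- t - c / t)) \<in> borel_measurable (lebesgue_on {0<..})"
    by (intro continuous_imp_measurable_on_sets_lebesgue continuous_intros) auto
  show "{(0::real)<..} \<in> sets lebesgue" by (rule sets_completionI_sets) simp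
  show "(\<lambda>t. t powr (\<nu> - 1) * exp (- t)) integrable_on {0<..}"
  proof (rule abs_int_imp_int, rule abs_int_subset[OF gamma_abs_int[OF \<nu>]])
    show "{(0::real)<..} \<in> sets lebesgue" by (rule sets_completionI_sets) simp
  qed auto
  fix t :: real assume t: "t \<in> {0<..}"
  have "exp (- t - c / t) \<le> exp (- t)" using t c by simp
  then show "norm (t powr (\<nu> - 1) * exp (- t - c / t)) \<le> t powr (\<nu> - 1) * exp (- t)"
    by (simp add: mult_left_mono)
qed

lemma F_abs_int0:
  fixes \<nu> c :: real
  assumes \<nu>: "\<nu> > 0" and c: "c \<ge> 0"
  shows "(\<lambda>t. t powr (\<nu> - 1) * exp (- t - c / t)) absolutely_integrable_on {0..}"
  using F_abs_int[OF assms]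
  by (subst absolutely_integrable_spike_set_eq[where T="{0<..}"]) (auto intro: negligible_subset[of "{0}"])

lemma integral_0_open:
  fixes \<nu> c :: real
  shows "integral {0..} (\<lambda>t. t powr (\<nu> - 1) * exp (- t - c / t)) = integral {0<..} (\<lambda>t. t powr (\<nu> - 1) * exp (- t - c / t))"
  by (rule integral_spike_set) (auto intro: negligible_subset[of "{0}"])

lemma abs_int_integrable: "f absolutely_integrable_on S \<Longrightarrow> (f has_integral integral S f) S"
  for f :: "real \<Rightarrow> real"
  by (rule integrable_integral, rule abs_int_imp_int)

lemma split_int:
  fixes f :: "real \<Rightarrow> real"
  assumes f: "f absolutely_integrable_on (A \<union> B)" and A: "A \<in> sets lebesgue" and B: "B \<in> sets lebesgue"
    and neg: "negligible (A \<inter> B)"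
  shows "integral (A \<union> B) f = integral A f + integral B f"
proof -
  have "(f has_integral (integral A f + integral B f)) (A \<union> B)"
    by (intro has_integral_Un abs_int_integrable abs_int_subset[OF f] A B neg) auto
  then show ?thesis by (rule integral_unique)
qed

lemma cov:
  fixes f g g' :: "real \<Rightarrow> real"
  assumes S: "S \<in> sets lebesgue"
    and der: "\<And>x. x \<in> S \<Longrightarrow> (g has_field_derivative g' x) (at x within S)"
    and inj: "inj_on g S" and f: "f absolutely_integrable_on T" and img: "g ` S = T"
  shows "(\<lambda>x. \<bar>g' x\<bar> * f (g x)) absolutely_integrable_on S"
    "integral S (\<lambda>x. \<bar>g' x\<bar> * f (g x)) = integral T f"
  using has_absolute_integral_change_of_variables_1'[OF S der inj, of f "integral T f"] f img by auto



lemma leb_Ici: "{a::real..} \<in> sets lebesgue" by simp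
lemma leb_Ioi: "{a::real<..} \<in> sets lebesgue" by (rule sets_completionI_sets) simp
lemma leb_Ioc: "{a::real<..b} \<in> sets lebesgue" by (rule sets_completionI_sets) simp

lemma bessel_rel:
  fixes x \<nu> :: real
  assumes x: "x > 0" and \<nu>: "\<nu> > 0"
  shows "integral {0..} (\<lambda>t. t powr (\<nu> - 1) * exp (- t - (x\<^sup>2 / 4) / t)) = 2 * (x / 2) powr \<nu> * besselK \<nu> x"
proof -
  define F where "F = (\<lambda>t::real. t powr (\<nu> - 1) * exp (- t - (x\<^sup>2 / 4) / t))"
  define p where "p = x / 2"
  have p: "p > 0" using x by (simp add: p_def)
  have Fi: "F absolutely_integrable_on {0<..}"
    unfolding F_def by (rule F_abs_int[OF \<nu>]) simp
  have Fi1: "F absolutely_integrable_on {p..}"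
    by (rule abs_int_subset[OF Fi leb_Ici]) (use p in auto)
  have Fi2: "F absolutely_integrable_on {0<..p}"
    by (rule abs_int_subset[OF Fi leb_Ioc]) auto
  have ptF: "t * F t = p powr \<nu> * (exp (\<nu> * u) * exp (- x * cosh u))" if "t = p * exp u" for t u
  proof -
    have t: "t > 0" using that p by simp
    have "t * t powr (\<nu> - 1) = t powr \<nu>"
      using t by (simp add: powr_mult_base)
    also have "\<dots> = p powr \<nu> * exp (\<nu> * u)"
      using p that by (simp add: powr_mult exp_powr_real mult.commute)
    finally have e1: "t * t powr (\<nu> - 1) = p powr \<nu> * exp (\<nu> * u)" .
    have "- t - (x\<^sup>2 / 4) / t = - x * cosh u"
      using that p by (simp add: p_def cosh_def exp_minus field_simps power2_eq_square)
    then show ?thesis using e1 by (simp add: F_def mult.assoc[symmetric])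
  qed
  have img1: "(\<lambda>u. p * exp u) ` {0..} = {p..}"
  proof
    show "(\<lambda>u. p * exp u) ` {0..} \<subseteq> {p..}" using p by auto
    show "{p..} \<subseteq> (\<lambda>u. p * exp u) ` {0..}"
    proof
      fix t assume "t \<in> {p..}"
      then have "t \<ge> p" by simp
      then have "t = p * exp (ln (t / p))" "ln (t / p) \<in> {0..}" using p by auto
      then show "t \<in> (\<lambda>u. p * exp u) ` {0..}" by blast
    qed
  qed
  have inj1: "inj_on (\<lambda>u. p * exp u) {0..}" using p by (auto simp: inj_on_def)
  have d1: "\<And>u. u \<in> {0..} \<Longrightarrow> ((\<lambda>u. p * exp u) has_field_derivative p * exp u) (at u within {0..})"
    by (auto intro!: derivative_eq_intros)
  note c1 = cov[OF leb_Ici d1 inj1 Fi1 img1]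
  have c1': "(\<lambda>u. \<bar>p * exp u\<bar> * F (p * exp u)) absolutely_integrable_on {0..} \<and>
       integral {0..} (\<lambda>u. \<bar>p * exp u\<bar> * F (p * exp u)) = integral {p..} F"
    using c1 by blast
  have img2: "(\<lambda>u. p * exp (- u)) ` {0..} = {0<..p}"
  proof
    show "(\<lambda>u. p * exp (- u)) ` {0..} \<subseteq> {0<..p}" using p by auto
    show "{0<..p} \<subseteq> (\<lambda>u. p * exp (- u)) ` {0..}"
    proof
      fix t assume "t \<in> {0<..p}"
      then have "t > 0" "t \<le> p" by auto
      then have "t = p * exp (- ln (p / t))" "ln (p / t) \<in> {0..}" using p by (auto simp: ln_div exp_diff)
      then show "t \<in> (\<lambda>u. p * exp (- u)) ` {0..}" by blast
    qed
  qed
  have inj2: "inj_on (\<lambda>u. p * exp (- u)) {0..}" using p by (auto simp: inj_on_def)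
  have d2: "\<And>u. u \<in> {0..} \<Longrightarrow> ((\<lambda>u. p * exp (- u)) has_field_derivative - (p * exp (- u))) (at u within {0..})"
    by (auto intro!: derivative_eq_intros)
  note c2 = cov[OF leb_Ici d2 inj2 Fi2 img2]
  have c2': "(\<lambda>u. \<bar>- (p * exp (- u))\<bar> * F (p * exp (- u))) absolutely_integrable_on {0..} \<and>
       integral {0..} (\<lambda>u. \<bar>- (p * exp (- u))\<bar> * F (p * exp (- u))) = integral {0<..p} F"
    using c2 by blast
  define H1 where "H1 = (\<lambda>u. \<bar>p * exp u\<bar> * F (p * exp u))"
  define H2 where "H2 = (\<lambda>u. \<bar>- (p * exp (- u))\<bar> * F (p * exp (- u)))"
  have h1: "(H1 has_integral integral {p..} F) {0..}"
    using c1' unfolding H1_def by (metis abs_int_integrable)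
  have h2: "(H2 has_integral integral {0<..p} F) {0..}"
    using c2' unfolding H2_def by (metis abs_int_integrable)
  have hsum: "((\<lambda>u. 1 / (2 * p powr \<nu>) * (H1 u + H2 u)) has_integral
      1 / (2 * p powr \<nu>) * (integral {p..} F + integral {0<..p} F)) {0..}"
    by (intro has_integral_mult_right has_integral_add h1 h2)
  have pt: "1 / (2 * p powr \<nu>) * (H1 u + H2 u) = exp (- x * cosh u) * cosh (\<nu> * u)" for u
  proof -
    have "H1 u = p powr \<nu> * (exp (\<nu> * u) * exp (- x * cosh u))"
      unfolding H1_def using p by (simp add: ptF)
    moreover have "H2 u = p powr \<nu> * (exp (\<nu> * (- u)) * exp (- x * cosh (- u)))"
      unfolding H2_def using p by (simp add: ptF)
    ultimately show ?thesis
      using p by (simp add: cosh_def field_simps)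
  qed
  have K: "besselK \<nu> x = 1 / (2 * p powr \<nu>) * (integral {p..} F + integral {0<..p} F)"
    unfolding besselK_def using hsum pt by (simp add: integral_unique)
  have "integral {0..} F = integral {0<..} F"
    unfolding F_def by (rule integral_0_open)
  also have "{0<..} = {0<..p} \<union> {p..}" using p by auto
  also have "integral ({0<..p} \<union> {p..}) F = integral {0<..p} F + integral {p..} F"
  proof (rule split_int)
    show "F absolutely_integrable_on {0<..p} \<union> {p..}" using Fi p
      by (metis \<open>{0<..} = {0<..p} \<union> {p..}\<close>)
    show "negligible ({0<..p} \<inter> {p..})"
      by (rule negligible_subset[of "{p}"]) auto
  qed (auto intro: leb_Ioc)
  finally show ?thesis
    using K p unfolding F_def p_def by (simp add: field_simps)
qed



lemma matern_mix:
  fixes \<alpha> \<nu> \<xi> h :: real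
  assumes \<alpha>: "\<alpha> > 0" and \<nu>: "\<nu> > 0" and \<xi>: "\<xi> > 0" and h: "h \<ge> 0"
  shows "((\<lambda>t. (t powr (\<nu> - 1) * exp (- t) / Gamma \<nu>) * exp (- (1 / (4 * \<alpha>\<^sup>2 * t) * h\<^sup>2)))
     has_integral (matern h \<alpha> \<nu> - 1 / Gamma \<nu> * gen_inc_gamma \<nu> (1 / (4 * \<xi> * \<alpha>\<^sup>2)) (h\<^sup>2 / (4 * \<alpha>\<^sup>2))))
     {0..1 / (4 * \<xi> * \<alpha>\<^sup>2)}"
proof -
  define c where "c = h\<^sup>2 / (4 * \<alpha>\<^sup>2)"
  define b where "b = 1 / (4 * \<xi> * \<alpha>\<^sup>2)"
  define F where "F = (\<lambda>t::real. t powr (\<nu> - 1) * exp (- t - c / t))"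
  have c: "c \<ge> 0" by (simp add: c_def)
  have b: "b > 0" using \<xi> \<alpha> by (simp add: b_def)
  have G: "Gamma \<nu> > 0" using \<nu> by (rule Gamma_real_pos)
  have Fi: "F absolutely_integrable_on {0..}"
    unfolding F_def by (rule F_abs_int0[OF \<nu> c])
  have un: "{0..} = {0..b} \<union> {b..}" using b by auto
  have split: "integral {0..} F = integral {0..b} F + integral {b..} F"
    unfolding un
  proof (rule split_int)
    show "F absolutely_integrable_on {0..b} \<union> {b..}" using Fi un by metis
    show "negligible ({0..b} \<inter> {b..})"
      by (rule negligible_subset[of "{b}"]) auto
  qed auto
  have gen: "gen_inc_gamma \<nu> b c = integral {b..} F"
    by (simp add: gen_inc_gamma_def F_def)
  have full: "integral {0..} F = Gamma \<nu> * matern h \<alpha> \<nu>"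
  proof (cases "h = 0")
    case True
    have "F = (\<lambda>t. t powr (\<nu> - 1) / exp t)"
    proof (rule ext)
      fix t :: real
      have "exp (- t - c / t) = inverse (exp t)" by (simp add: c_def True exp_minus)
      then show "F t = t powr (\<nu> - 1) / exp t"
        unfolding F_def by (simp only: divide_inverse)
    qed
    then show ?thesis using Gamma_integral_real[OF \<nu>]
      by (simp add: matern_def True integral_unique)
  next
    case False
    define x where "x = h / \<alpha>"
    have x: "x > 0" using False h \<alpha> by (simp add: x_def)
    have cx: "c = x\<^sup>2 / 4" by (simp add: c_def x_def power_divide)
    have "integral {0..} F = 2 * (x / 2) powr \<nu> * besselK \<nu> x"
      unfolding F_def cx by (rule bessel_rel[OF x \<nu>])
    also have "2 * (x / 2) powr \<nu> = 2 powr (1 - \<nu>) * x powr \<nu>"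
      using x by (simp add: powr_divide powr_diff)
    finally show ?thesis
      using False G by (simp add: matern_def x_def)
  qed
  have hi: "(F has_integral integral {0..b} F) {0..b}"
    by (rule abs_int_integrable, rule abs_int_subset[OF Fi]) auto
  have hi2: "((\<lambda>t. 1 / Gamma \<nu> * F t) has_integral 1 / Gamma \<nu> * integral {0..b} F) {0..b}"
    by (rule has_integral_mult_right[OF hi])
  have val: "1 / Gamma \<nu> * integral {0..b} F = matern h \<alpha> \<nu> - 1 / Gamma \<nu> * gen_inc_gamma \<nu> b c"
    using split full gen G by (simp add: field_simps)
  have pt: "1 / Gamma \<nu> * F t = (t powr (\<nu> - 1) * exp (- t) / Gamma \<nu>) * exp (- (1 / (4 * \<alpha>\<^sup>2 * t) * h\<^sup>2))" for t
  proof -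
    have ct: "c / t = 1 / (4 * \<alpha>\<^sup>2 * t) * h\<^sup>2" by (simp add: c_def)
    have "exp (- t - c / t) = exp (- t) * exp (- (c / t))"
      by (simp only: diff_conv_add_uminus exp_add)
    then have "exp (- t - c / t) = exp (- t) * exp (- (1 / (4 * \<alpha>\<^sup>2 * t) * h\<^sup>2))"
      unfolding ct .
    then show ?thesis by (simp add: F_def)
  qed
  show ?thesis
    using hi2 unfolding val pt unfolding b_def c_def .
qed



theorem proposition1:
  fixes \<alpha>1 \<nu>1 \<alpha>2 \<nu>2 \<omega>1 \<omega>2 \<xi>1 \<xi>2 :: real
    and k :: nat and a :: "nat \<Rightarrow> real" and s :: "nat \<Rightarrow> real ^ 'd"
  assumes "\<alpha>1 > 0" "\<nu>1 > 0" "\<alpha>2 > 0" "\<nu>2 > 0"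
    and "\<omega>1 > 0" "\<omega>2 > 0" "\<xi>1 > 0" "\<xi>2 > 0"
  shows "(\<Sum>i<k. \<Sum>j<k. a i * a j * phiCM \<alpha>1 \<nu>1 \<alpha>2 \<nu>2 \<omega>1 \<omega>2 \<xi>1 \<xi>2 (norm (s i - s j))) \<ge> 0"
proof -
  define \<phi>1 where "\<phi>1 h = lower_inc_gamma (\<nu>1/2) ((h\<^sup>2 + \<alpha>1) * \<xi>1) / Gamma (\<nu>1/2) * cauchy h \<alpha>1 \<nu>1" for h
  define \<phi>2 where "\<phi>2 h = matern h \<alpha>2 \<nu>2 - 1 / Gamma \<nu>2 * gen_inc_gamma \<nu>2 (1 / (4 * \<xi>2 * \<alpha>2\<^sup>2)) (h\<^sup>2 / (4 * \<alpha>2\<^sup>2))" for h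
  have P1: "(\<Sum>i<k. \<Sum>j<k. a i * a j * \<phi>1 (norm (s i - s j))) \<ge> 0"
  proof (rule mix_psd[where S="{0..\<xi>1}" and g="\<lambda>u. u"
        and w="\<lambda>u. \<alpha>1 powr (\<nu>1/2) / Gamma (\<nu>1/2) * (u powr (\<nu>1/2 - 1) * exp (- (\<alpha>1 * u)))"])
    fix h :: real assume h: "h \<ge> 0"
    note hi = cauchy_mix[OF assms(1,2,7) h]
    show "(\<lambda>v. \<alpha>1 powr (\<nu>1/2) / Gamma (\<nu>1/2) * (v powr (\<nu>1/2 - 1) * exp (- (\<alpha>1 * v))) * exp (- (v * h\<^sup>2))) integrable_on {0..\<xi>1}"
      using hi by blast
    show "\<phi>1 h = integral {0..\<xi>1} (\<lambda>v. \<alpha>1 powr (\<nu>1/2) / Gamma (\<nu>1/2) * (v powr (\<nu>1/2 - 1) * exp (- (\<alpha>1 * v))) * exp (- (v * h\<^sup>2)))"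
      unfolding \<phi>1_def by (rule integral_unique[OF hi, symmetric])
  next
    fix v :: real assume "v \<in> {0..\<xi>1}"
    have "Gamma (\<nu>1/2) > 0" using assms(2) by (intro Gamma_real_pos) simp
    then show "0 \<le> \<alpha>1 powr (\<nu>1/2) / Gamma (\<nu>1/2) * (v powr (\<nu>1/2 - 1) * exp (- (\<alpha>1 * v)))"
      by simp
    show "0 \<le> v" using \<open>v \<in> {0..\<xi>1}\<close> by simp
  qed
  have P2: "(\<Sum>i<k. \<Sum>j<k. a i * a j * \<phi>2 (norm (s i - s j))) \<ge> 0"
  proof (rule mix_psd[where S="{0..1 / (4 * \<xi>2 * \<alpha>2\<^sup>2)}" and g="\<lambda>t. 1 / (4 * \<alpha>2\<^sup>2 * t)"
        and w="\<lambda>t. t powr (\<nu>2 - 1) * exp (- t) / Gamma \<nu>2"])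
    fix h :: real assume h: "h \<ge> 0"
    note hi = matern_mix[OF assms(3,4,8) h]
    show "(\<lambda>v. v powr (\<nu>2 - 1) * exp (- v) / Gamma \<nu>2 * exp (- (1 / (4 * \<alpha>2\<^sup>2 * v) * h\<^sup>2))) integrable_on {0..1 / (4 * \<xi>2 * \<alpha>2\<^sup>2)}"
      using hi by blast
    show "\<phi>2 h = integral {0..1 / (4 * \<xi>2 * \<alpha>2\<^sup>2)} (\<lambda>v. v powr (\<nu>2 - 1) * exp (- v) / Gamma \<nu>2 * exp (- (1 / (4 * \<alpha>2\<^sup>2 * v) * h\<^sup>2)))"
      unfolding \<phi>2_def by (rule integral_unique[OF hi, symmetric])
  next
    fix v :: real assume v: "v \<in> {0..1 / (4 * \<xi>2 * \<alpha>2\<^sup>2)}"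
    have "Gamma \<nu>2 > 0" using assms(4) by (intro Gamma_real_pos)
    then show "0 \<le> v powr (\<nu>2 - 1) * exp (- v) / Gamma \<nu>2"
      by simp
    show "0 \<le> 1 / (4 * \<alpha>2\<^sup>2 * v)" using v by simp
  qed
  have eq: "(\<Sum>i<k. \<Sum>j<k. a i * a j * phiCM \<alpha>1 \<nu>1 \<alpha>2 \<nu>2 \<omega>1 \<omega>2 \<xi>1 \<xi>2 (norm (s i - s j)))
      = \<omega>1 * (\<Sum>i<k. \<Sum>j<k. a i * a j * \<phi>1 (norm (s i - s j))) + \<omega>2 * (\<Sum>i<k. \<Sum>j<k. a i * a j * \<phi>2 (norm (s i - s j)))"
    by (simp add: phiCM_def \<phi>1_def \<phi>2_def sum_distrib_left sum.distrib[symmetric] distrib_left mult_ac)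
  show ?thesis unfolding eq using P1 P2 assms(5,6) by simp
qed


end
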